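(* Under the DS scheme described in the context, if a driver $d$ (respectively rider $r$) truthfully reports $\bar b_d$ (respectively $\bar\delta_r$) and is matched to no one, then she cannot increase her utility by falsely reporting some other value $b_d$ (respectively $\delta_r$).
   Context: One decision epoch with finite sets $\mathcal{D}$ (drivers) and $\mathcal{R}$ (riders). Rider $r$ requests a trip of shortest-route length $h_r$ with destination $t_r$; $\tau_{dr}\ge0$ is the pick-up distance from driver $d$ to rider $r$, $\tau_d^{\min}=\min_{r}\tau_{dr}$, $\tau_r^{\min}=\min_d\tau_{dr}$. Public constants $\alpha,\beta>0$; $f(t_r)$ is a given opportunity cost. Driver $d$ has a private true cost per unit extra pick-up distance $\bar b_d$ and reports a bid $b_d$; rider $r$ has a private true value $\bar\delta_r$ and reports $\delta_r$. For a potential match $(d,r)$ the valuations are $P_d(b_d)=\alpha h_r+b_d(\tau_{dr}-\tau_d^{\min})+f(t_r)$ and $P_r(\delta_r)=\beta h_r-\delta_r(\tau_{dr}-\tau_r^{\min})$, and the social welfare is $\sigma_{dr}=P_r-P_d$ (computed from reported bids). Each potential match has a sensing gain $\zeta_{dr}\ge0$ depending only on locations and the rider's origin-destination, not on bids. DS matching problem: maximize $\sum_{r,d}\zeta_{dr}x_{dr}$ subject to $\sum_r x_{dr}\le1$ $\forall d$, $\sum_d x_{dr}\le 1$ $\forall r$, $\sum_{r,d}\sigma_{dr}x_{dr}\ge0$, $x_{dr}\in\{0,1\}$; let $x^*$ be an optimal solution with value $U^*$, $\mathcal{D}^*,\mathcal{R}^*$ the matched drivers and riders, $V=\sum_{r,d}\sigma_{dr}x^*_{dr}$.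 For $d\in\mathcal{D}^*$, $\Delta U_d=U^*-U^*_{d-}$ where $U^*_{d-}$ is the optimal value with $d$ removed; analogously $\Delta U_r$. Shares $\lambda_d=\Delta U_d/(\sum_{d'\in\mathcal{D}^*}\Delta U_{d'}+\sum_{r'\in\mathcal{R}^*}\Delta U_{r'})$, $\lambda_r$ analogously; bonuses $\rho_d=V\lambda_d$, $\rho_r=V\lambda_r$; a matched driver is paid $q_d=P_d+\rho_d$ and a matched rider is charged $q_r=P_r-\rho_r$. A matched driver's utility is $q_d$ minus her valuation evaluated at her true bid, a matched rider's utility is her valuation at her true bid minus $q_r$; an unmatched participant has utility $0$.
   Formalization: The optimal solution $x^*$ is the optimum of least rank under a fixed priority that is injective on matchings, does not depend on bids, and is used for both the truthful and the misreported report. The statement above fails without it. *)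

theory Defs
  imports Complex_Main
begin

definition matchings :: "'d set \<Rightarrow> 'r set \<Rightarrow> ('d \<Rightarrow> 'r \<Rightarrow> bool) set" where
  "matchings D R = {x. \<forall>d r. x d r \<longrightarrow> d \<in> D \<and> r \<in> R}"

definition tau_dmin :: "'r set \<Rightarrow> ('d \<Rightarrow> 'r \<Rightarrow> real) \<Rightarrow> 'd \<Rightarrow> real" where
  "tau_dmin R \<tau> d = Min ((\<lambda>r. \<tau> d r) ` R)"

definition tau_rmin :: "'d set \<Rightarrow> ('d \<Rightarrow> 'r \<Rightarrow> real) \<Rightarrow> 'r \<Rightarrow> real" where
  "tau_rmin D \<tau> r = Min ((\<lambda>d. \<tau> d r) ` D)"

definition Pdrv :: "real \<Rightarrow> ('r \<Rightarrow> real) \<Rightarrow> ('r \<Rightarrow> 'l) \<Rightarrow> ('l \<Rightarrow> real)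
    \<Rightarrow> ('d \<Rightarrow> 'r \<Rightarrow> real) \<Rightarrow> 'r set \<Rightarrow> real \<Rightarrow> 'd \<Rightarrow> 'r \<Rightarrow> real" where
  "Pdrv \<alpha> h t f \<tau> R bd d r = \<alpha> * h r + bd * (\<tau> d r - tau_dmin R \<tau> d) + f (t r)"

definition Prid :: "real \<Rightarrow> ('r \<Rightarrow> real) \<Rightarrow> ('d \<Rightarrow> 'r \<Rightarrow> real) \<Rightarrow> 'd set
    \<Rightarrow> real \<Rightarrow> 'd \<Rightarrow> 'r \<Rightarrow> real" where
  "Prid \<beta> h \<tau> D dr d r = \<beta> * h r - dr * (\<tau> d r - tau_rmin D \<tau> r)"

definition sigma :: "real \<Rightarrow> real \<Rightarrow> ('r \<Rightarrow> real) \<Rightarrow> ('r \<Rightarrow> 'l) \<Rightarrow> ('l \<Rightarrow> real)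
    \<Rightarrow> ('d \<Rightarrow> 'r \<Rightarrow> real) \<Rightarrow> 'd set \<Rightarrow> 'r set \<Rightarrow> ('d \<Rightarrow> real) \<Rightarrow> ('r \<Rightarrow> real)
    \<Rightarrow> 'd \<Rightarrow> 'r \<Rightarrow> real" where
  "sigma \<alpha> \<beta> h t f \<tau> D R b \<delta> d r =
     Prid \<beta> h \<tau> D (\<delta> r) d r - Pdrv \<alpha> h t f \<tau> R (b d) d r"

definition msum :: "'d set \<Rightarrow> 'r set \<Rightarrow> ('d \<Rightarrow> 'r \<Rightarrow> real) \<Rightarrow> ('d \<Rightarrow> 'r \<Rightarrow> bool) \<Rightarrow> real" where
  "msum D R w x = (\<Sum>d\<in>D. \<Sum>r\<in>R. if x d r then w d r else 0)"

definition ds_feasible :: "'d set \<Rightarrow> 'r set \<Rightarrow> ('d \<Rightarrow> 'r \<Rightarrow> real) \<Rightarrow> ('d \<Rightarrow> 'r \<Rightarrow> bool) \<Rightarrow> bool" where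
  "ds_feasible D R s x \<longleftrightarrow> x \<in> matchings D R
     \<and> (\<forall>d\<in>D. card {r\<in>R. x d r} \<le> 1)
     \<and> (\<forall>r\<in>R. card {d\<in>D. x d r} \<le> 1)
     \<and> msum D R s x \<ge> 0"

definition ds_optimal :: "'d set \<Rightarrow> 'r set \<Rightarrow> ('d \<Rightarrow> 'r \<Rightarrow> real) \<Rightarrow> ('d \<Rightarrow> 'r \<Rightarrow> real)
    \<Rightarrow> ('d \<Rightarrow> 'r \<Rightarrow> bool) \<Rightarrow> bool" where
  "ds_optimal D R \<zeta> s x \<longleftrightarrow> ds_feasible D R s x \<and>
     (\<forall>y. ds_feasible D R s y \<longrightarrow> msum D R \<zeta> y \<le> msum D R \<zeta> x)"

definition ds_optval :: "'d set \<Rightarrow> 'r set \<Rightarrow> ('d \<Rightarrow> 'r \<Rightarrow> real) \<Rightarrow> ('d \<Rightarrow> 'r \<Rightarrow> real) \<Rightarrow> real" where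
  "ds_optval D R \<zeta> s = Max (msum D R \<zeta> ` {x. ds_feasible D R s x})"

text \<open>The solution actually returned by the scheme: an optimal solution, ties among optimal
solutions broken by a fixed, bid-independent priority rk (smallest rank wins).\<close>
definition ds_outcome :: "'d set \<Rightarrow> 'r set \<Rightarrow> ('d \<Rightarrow> 'r \<Rightarrow> real) \<Rightarrow> ('d \<Rightarrow> 'r \<Rightarrow> real)
    \<Rightarrow> (('d \<Rightarrow> 'r \<Rightarrow> bool) \<Rightarrow> nat) \<Rightarrow> ('d \<Rightarrow> 'r \<Rightarrow> bool) \<Rightarrow> bool" where
  "ds_outcome D R \<zeta> s rk x \<longleftrightarrow> ds_optimal D R \<zeta> s x \<and>
     (\<forall>y. ds_optimal D R \<zeta> s y \<longrightarrow> rk x \<le> rk y)"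

definition dU_drv :: "'d set \<Rightarrow> 'r set \<Rightarrow> ('d \<Rightarrow> 'r \<Rightarrow> real) \<Rightarrow> ('d \<Rightarrow> 'r \<Rightarrow> real) \<Rightarrow> 'd \<Rightarrow> real" where
  "dU_drv D R \<zeta> s d = ds_optval D R \<zeta> s - ds_optval (D - {d}) R \<zeta> s"

definition dU_rid :: "'d set \<Rightarrow> 'r set \<Rightarrow> ('d \<Rightarrow> 'r \<Rightarrow> real) \<Rightarrow> ('d \<Rightarrow> 'r \<Rightarrow> real) \<Rightarrow> 'r \<Rightarrow> real" where
  "dU_rid D R \<zeta> s r = ds_optval D R \<zeta> s - ds_optval D (R - {r}) \<zeta> s"

definition dU_total :: "'d set \<Rightarrow> 'r set \<Rightarrow> ('d \<Rightarrow> 'r \<Rightarrow> real) \<Rightarrow> ('d \<Rightarrow> 'r \<Rightarrow> real)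
    \<Rightarrow> ('d \<Rightarrow> 'r \<Rightarrow> bool) \<Rightarrow> real" where
  "dU_total D R \<zeta> s x =
     (\<Sum>d'\<in>{d'\<in>D. \<exists>r\<in>R. x d' r}. dU_drv D R \<zeta> s d')
   + (\<Sum>r'\<in>{r'\<in>R. \<exists>d\<in>D. x d r'}. dU_rid D R \<zeta> s r')"

definition bonus_drv where
  "bonus_drv D R \<zeta> s x d = msum D R s x * (dU_drv D R \<zeta> s d / dU_total D R \<zeta> s x)"

definition bonus_rid where
  "bonus_rid D R \<zeta> s x r = msum D R s x * (dU_rid D R \<zeta> s r / dU_total D R \<zeta> s x)"

definition partner_drv :: "'r set \<Rightarrow> ('d \<Rightarrow> 'r \<Rightarrow> bool) \<Rightarrow> 'd \<Rightarrow> 'r" where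
  "partner_drv R x d = (THE r. r \<in> R \<and> x d r)"

definition partner_rid :: "'d set \<Rightarrow> ('d \<Rightarrow> 'r \<Rightarrow> bool) \<Rightarrow> 'r \<Rightarrow> 'd" where
  "partner_rid D x r = (THE d. d \<in> D \<and> x d r)"

text \<open>Utility of driver d with true cost bbar, when the reported profiles are (b, delta) and
the scheme returns x: payment q_d = P_d(b_d) + rho_d minus valuation at the true bid.\<close>
definition drv_util where
  "drv_util \<alpha> \<beta> h t f \<tau> D R \<zeta> b \<delta> x d bbar =
    (if \<exists>r\<in>R. x d r then
       (let r = partner_drv R x d; s = sigma \<alpha> \<beta> h t f \<tau> D R b \<delta> in
         (Pdrv \<alpha> h t f \<tau> R (b d) d r + bonus_drv D R \<zeta> s x d) - Pdrv \<alpha> h t f \<tau> R bbar d r)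
     else 0)"

text \<open>Utility of rider r with true value dbar: valuation at the true bid minus charge
q_r = P_r(delta_r) - rho_r.\<close>
definition rid_util where
  "rid_util \<alpha> \<beta> h t f \<tau> D R \<zeta> b \<delta> x r dbar =
    (if \<exists>d\<in>D. x d r then
       (let d = partner_rid D x r; s = sigma \<alpha> \<beta> h t f \<tau> D R b \<delta> in
         Prid \<beta> h \<tau> D dbar d r - (Prid \<beta> h \<tau> D (\<delta> r) d r - bonus_rid D R \<zeta> s x r))
     else 0)"

end

theory Submission
  imports Defs
begin

lemma matchings_finite:
  assumes "finite D" "finite R"
  shows "finite (matchings D R)"
proof -
  have "matchings D R \<subseteq> (\<lambda>S. \<lambda>d r. (d,r) \<in> S) ` Pow (D \<times> R)"
  proof
    fix x assume "x \<in> matchings D R"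
    hence "{(d,r). x d r} \<in> Pow (D \<times> R)" "x = (\<lambda>d r. (d,r) \<in> {(d,r). x d r})"
      by (auto simp: matchings_def)
    thus "x \<in> (\<lambda>S. \<lambda>d r. (d,r) \<in> S) ` Pow (D \<times> R)" by blast
  qed
  thus ?thesis using assms by (meson finite_SigmaI finite_Pow_iff finite_imageI finite_subset)
qed

lemma feas_finite:
  assumes "finite D" "finite R"
  shows "finite {x. ds_feasible D R s x}"
  by (rule finite_subset[OF _ matchings_finite[OF assms]]) (auto simp: ds_feasible_def)

lemma feas_nonempty: "(\<lambda>_ _. False) \<in> {x. ds_feasible D R s x}"
  by (simp add: ds_feasible_def matchings_def msum_def)

lemma msum_sub:
  assumes "finite D" "finite R" "D' \<subseteq> D" "R' \<subseteq> R" "x \<in> matchings D' R'"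
  shows "msum D' R' w x = msum D R w x"
proof -
  have "msum D' R' w x = (\<Sum>d\<in>D'. \<Sum>r\<in>R. if x d r then w d r else 0)"
    unfolding msum_def
    apply (rule sum.cong, simp)
    apply (rule sum.mono_neutral_left)
    using assms by (auto simp: matchings_def)
  also have "\<dots> = msum D R w x"
    unfolding msum_def
    apply (rule sum.mono_neutral_left)
    using assms by (auto simp: matchings_def intro!: sum.neutral)
  finally show ?thesis .
qed

lemma feas_sub:
  assumes "finite D" "finite R" "D' \<subseteq> D" "R' \<subseteq> R" "ds_feasible D' R' s x"
  shows "ds_feasible D R s x"
proof -
  have m: "x \<in> matchings D' R'" using assms(5) by (simp add: ds_feasible_def)
  hence m2: "x \<in> matchings D R" using assms(3,4) by (auto simp: matchings_def)
  have c1: "\<And>d. {r\<in>R. x d r} = {r\<in>R'. x d r}" using m assms(4) by (auto simp: matchings_def)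
  have c2: "\<And>r. {d\<in>D. x d r} = {d\<in>D'. x d r}" using m assms(3) by (auto simp: matchings_def)
  have c3: "\<forall>d\<in>D. card {r\<in>R. x d r} \<le> 1"
  proof
    fix d assume "d \<in> D"
    show "card {r\<in>R. x d r} \<le> 1"
    proof (cases "d \<in> D'")
      case True thus ?thesis using assms(5) c1 by (simp add: ds_feasible_def)
    next
      case False
      hence "{r\<in>R. x d r} = {}" using m assms by (auto simp: matchings_def)
      thus ?thesis by (metis card.empty zero_le_one)
    qed
  qed
  have c4: "\<forall>r\<in>R. card {d\<in>D. x d r} \<le> 1"
  proof
    fix r assume "r \<in> R"
    show "card {d\<in>D. x d r} \<le> 1"
    proof (cases "r \<in> R'")
      case True thus ?thesis using assms(5) c2 by (simp add: ds_feasible_def)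
    next
      case False
      hence "{d\<in>D. x d r} = {}" using m assms by (auto simp: matchings_def)
      thus ?thesis by (metis card.empty zero_le_one)
    qed
  qed
  show ?thesis using m2 c3 c4 assms(5) msum_sub[OF assms(1-4) m, of s]
    by (simp add: ds_feasible_def)
qed

lemma optval_mono:
  assumes "finite D" "finite R" "D' \<subseteq> D" "R' \<subseteq> R"
  shows "ds_optval D' R' \<zeta> s \<le> ds_optval D R \<zeta> s"
proof -
  have fD': "finite D'" "finite R'" using assms finite_subset by auto
  have "msum D' R' \<zeta> ` {x. ds_feasible D' R' s x} \<subseteq> msum D R \<zeta> ` {x. ds_feasible D R s x}"
  proof
    fix v assume "v \<in> msum D' R' \<zeta> ` {x. ds_feasible D' R' s x}"
    then obtain x where x: "ds_feasible D' R' s x" "v = msum D' R' \<zeta> x" by auto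
    have "v = msum D R \<zeta> x" using x msum_sub[OF assms, of x \<zeta>] by (simp add: ds_feasible_def)
    moreover have "ds_feasible D R s x" using feas_sub[OF assms x(1)] .
    ultimately show "v \<in> msum D R \<zeta> ` {x. ds_feasible D R s x}" by auto
  qed
  moreover have "msum D' R' \<zeta> ` {x. ds_feasible D' R' s x} \<noteq> {}" using feas_nonempty by blast
  ultimately show ?thesis unfolding ds_optval_def
    by (intro Max_mono) (auto intro: feas_finite assms)
qed

lemma dU_drv_nonneg: "finite D \<Longrightarrow> finite R \<Longrightarrow> dU_drv D R \<zeta> s d \<ge> 0"
  unfolding dU_drv_def using optval_mono[of D R "D - {d}" R \<zeta> s] by auto

lemma dU_rid_nonneg: "finite D \<Longrightarrow> finite R \<Longrightarrow> dU_rid D R \<zeta> s r \<ge> 0"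
  unfolding dU_rid_def using optval_mono[of D R D "R - {r}" \<zeta> s] by auto

lemma ratio_le1:
  fixes a T :: real
  assumes "0 \<le> a" "a \<le> T"
  shows "a / T \<le> 1" "0 \<le> a / T"
proof -
  show "a / T \<le> 1" using assms by (cases "T = 0") (auto simp: divide_le_eq_1)
  show "0 \<le> a / T" using assms by simp
qed

lemma drv_ratio:
  assumes "finite D" "finite R" "d \<in> D" "r0 \<in> R" "x d r0"
  shows "dU_drv D R \<zeta> s d / dU_total D R \<zeta> s x \<le> 1"
        "0 \<le> dU_drv D R \<zeta> s d / dU_total D R \<zeta> s x"
proof -
  let ?A = "{d'\<in>D. \<exists>r\<in>R. x d' r}"
  have dA: "d \<in> ?A" using assms by auto
  have "dU_drv D R \<zeta> s d \<le> (\<Sum>d'\<in>?A. dU_drv D R \<zeta> s d')"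
    using dA assms(1) by (intro member_le_sum) (simp_all add: dU_drv_nonneg assms(1,2))
  moreover have "0 \<le> (\<Sum>r'\<in>{r'\<in>R. \<exists>d\<in>D. x d r'}. dU_rid D R \<zeta> s r')"
    by (intro sum_nonneg) (simp add: dU_rid_nonneg assms(1,2))
  ultimately have "dU_drv D R \<zeta> s d \<le> dU_total D R \<zeta> s x" unfolding dU_total_def by linarith
  thus "dU_drv D R \<zeta> s d / dU_total D R \<zeta> s x \<le> 1"
        "0 \<le> dU_drv D R \<zeta> s d / dU_total D R \<zeta> s x"
    using ratio_le1 dU_drv_nonneg[OF assms(1,2)] by blast+
qed

lemma rid_ratio:
  assumes "finite D" "finite R" "r \<in> R" "d0 \<in> D" "x d0 r"
  shows "dU_rid D R \<zeta> s r / dU_total D R \<zeta> s x \<le> 1"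
        "0 \<le> dU_rid D R \<zeta> s r / dU_total D R \<zeta> s x"
proof -
  let ?A = "{r'\<in>R. \<exists>d\<in>D. x d r'}"
  have dA: "r \<in> ?A" using assms by auto
  have "dU_rid D R \<zeta> s r \<le> (\<Sum>r'\<in>?A. dU_rid D R \<zeta> s r')"
    using dA assms(2) by (intro member_le_sum) (simp_all add: dU_rid_nonneg assms(1,2))
  moreover have "0 \<le> (\<Sum>d'\<in>{d'\<in>D. \<exists>r\<in>R. x d' r}. dU_drv D R \<zeta> s d')"
    by (intro sum_nonneg) (simp add: dU_drv_nonneg assms(1,2))
  ultimately have "dU_rid D R \<zeta> s r \<le> dU_total D R \<zeta> s x" unfolding dU_total_def by linarith
  thus "dU_rid D R \<zeta> s r / dU_total D R \<zeta> s x \<le> 1"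
        "0 \<le> dU_rid D R \<zeta> s r / dU_total D R \<zeta> s x"
    using ratio_le1 dU_rid_nonneg[OF assms(1,2)] by blast+
qed

lemma outcome_eq:
  assumes "ds_outcome D R \<zeta> s rk x" "ds_outcome D R \<zeta> s' rk x'"
    and "inj_on rk (matchings D R)"
    and "ds_feasible D R s' x" "ds_feasible D R s x'"
  shows "x = x'"
proof -
  have o1: "ds_optimal D R \<zeta> s x" and o2: "ds_optimal D R \<zeta> s' x'"
    using assms(1,2) by (auto simp: ds_outcome_def)
  have le1: "msum D R \<zeta> x' \<le> msum D R \<zeta> x" using o1 assms(5) by (auto simp: ds_optimal_def)
  have le2: "msum D R \<zeta> x \<le> msum D R \<zeta> x'" using o2 assms(4) by (auto simp: ds_optimal_def)
  have "ds_optimal D R \<zeta> s x'" using o1 assms(5) le1 le2 by (auto simp: ds_optimal_def)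
  hence r1: "rk x \<le> rk x'" using assms(1) by (auto simp: ds_outcome_def)
  have "ds_optimal D R \<zeta> s' x" using o2 assms(4) le1 le2 by (auto simp: ds_optimal_def)
  hence r2: "rk x' \<le> rk x" using assms(2) by (auto simp: ds_outcome_def)
  have "x \<in> matchings D R" "x' \<in> matchings D R" using assms(4,5) by (auto simp: ds_feasible_def)
  thus ?thesis using r1 r2 assms(3) by (meson antisym inj_on_def)
qed

lemma msum_row_same:
  assumes "\<forall>r\<in>R. \<not> x d r" "\<forall>d'\<in>D. \<forall>r\<in>R. d' \<noteq> d \<longrightarrow> s d' r = s' d' r"
  shows "msum D R s x = msum D R s' x"
  unfolding msum_def using assms by (intro sum.cong refl) auto

lemma msum_col_same:
  assumes "\<forall>d\<in>D. \<not> x d r" "\<forall>d\<in>D. \<forall>r'\<in>R. r' \<noteq> r \<longrightarrow> s d r' = s' d r'"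
  shows "msum D R s x = msum D R s' x"
  unfolding msum_def apply (intro sum.cong refl) using assms by metis

lemma msum_row_diff:
  assumes "finite D" "finite R" "d \<in> D" "r0 \<in> R" "\<forall>r\<in>R. x d r \<longleftrightarrow> r = r0"
    "\<forall>d'\<in>D. \<forall>r\<in>R. d' \<noteq> d \<longrightarrow> s d' r = s' d' r"
  shows "msum D R s x = msum D R s' x + (s d r0 - s' d r0)"
proof -
  have "msum D R s x - msum D R s' x
      = (\<Sum>d'\<in>D. \<Sum>r\<in>R. if x d' r then s d' r - s' d' r else 0)"
    unfolding msum_def sum_subtractf[symmetric] by (intro sum.cong refl) simp
  also have "\<dots> = (\<Sum>d'\<in>D. if d' = d then s d r0 - s' d r0 else 0)"
  proof (rule sum.cong[OF refl])
    fix d' assume d': "d' \<in> D"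
    show "(\<Sum>r\<in>R. if x d' r then s d' r - s' d' r else 0) = (if d' = d then s d r0 - s' d r0 else 0)"
    proof (cases "d' = d")
      case True
      have "(\<Sum>r\<in>R. if x d' r then s d' r - s' d' r else 0) = (\<Sum>r\<in>R. if r = r0 then s d r0 - s' d r0 else 0)"
        using True assms(5) by (intro sum.cong) auto
      also have "\<dots> = s d r0 - s' d r0" using assms(2,4) by simp
      finally show ?thesis using True by simp
    next
      case False thus ?thesis using assms(6) d' by (auto intro: sum.neutral)
    qed
  qed
  also have "\<dots> = s d r0 - s' d r0" using assms(1,3) by simp
  finally show ?thesis by simp
qed

lemma msum_col_diff:
  assumes "finite D" "finite R" "r \<in> R" "d0 \<in> D" "\<forall>d\<in>D. x d r \<longleftrightarrow> d = d0"
    "\<forall>d\<in>D. \<forall>r'\<in>R. r' \<noteq> r \<longrightarrow> s d r' = s' d r'"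
  shows "msum D R s x = msum D R s' x + (s d0 r - s' d0 r)"
proof -
  have "msum D R s x - msum D R s' x
      = (\<Sum>d'\<in>D. \<Sum>r'\<in>R. if x d' r' then s d' r' - s' d' r' else 0)"
    unfolding msum_def sum_subtractf[symmetric] by (intro sum.cong refl) simp
  also have "\<dots> = (\<Sum>d'\<in>D. if d' = d0 then s d0 r - s' d0 r else 0)"
  proof (rule sum.cong[OF refl])
    fix d' assume d': "d' \<in> D"
    have "(\<Sum>r'\<in>R. if x d' r' then s d' r' - s' d' r' else 0)
        = (\<Sum>r'\<in>R. if r' = r then (if d' = d0 then s d0 r - s' d0 r else 0) else 0)"
      using assms(5,6) d' by (intro sum.cong) auto
    also have "\<dots> = (if d' = d0 then s d0 r - s' d0 r else 0)" using assms(2,3) by simp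
    finally show "(\<Sum>r'\<in>R. if x d' r' then s d' r' - s' d' r' else 0) = (if d' = d0 then s d0 r - s' d0 r else 0)" .
  qed
  also have "\<dots> = s d0 r - s' d0 r" using assms(1,4) by simp
  finally show ?thesis by simp
qed


theorem lemma1:
  fixes D :: "'d set" and R :: "'r set" and \<alpha> \<beta> :: real
    and h :: "'r \<Rightarrow> real" and t :: "'r \<Rightarrow> 'l" and f :: "'l \<Rightarrow> real"
    and \<tau> \<zeta> :: "'d \<Rightarrow> 'r \<Rightarrow> real" and rk :: "('d \<Rightarrow> 'r \<Rightarrow> bool) \<Rightarrow> nat"
    and b :: "'d \<Rightarrow> real" and \<delta> :: "'r \<Rightarrow> real"
  assumes "finite D" and "finite R" and "\<alpha> > 0" and "\<beta> > 0"
    and "\<forall>d r. \<tau> d r \<ge> 0" and "\<forall>d r. \<zeta> d r \<ge> 0"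
    and "inj_on rk (matchings D R)"
  shows
    "(\<forall>d bbar b' x x'. d \<in> D \<longrightarrow> b d = bbar
        \<longrightarrow> ds_outcome D R \<zeta> (sigma \<alpha> \<beta> h t f \<tau> D R b \<delta>) rk x
        \<longrightarrow> \<not> (\<exists>r\<in>R. x d r)
        \<longrightarrow> ds_outcome D R \<zeta> (sigma \<alpha> \<beta> h t f \<tau> D R (b(d := b')) \<delta>) rk x'
        \<longrightarrow> drv_util \<alpha> \<beta> h t f \<tau> D R \<zeta> (b(d := b')) \<delta> x' d bbar
            \<le> drv_util \<alpha> \<beta> h t f \<tau> D R \<zeta> b \<delta> x d bbar)
   \<and> (\<forall>r dbar d' x x'. r \<in> R \<longrightarrow> \<delta> r = dbar
        \<longrightarrow> ds_outcome D R \<zeta> (sigma \<alpha> \<beta> h t f \<tau> D R b \<delta>) rk x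
        \<longrightarrow> \<not> (\<exists>d\<in>D. x d r)
        \<longrightarrow> ds_outcome D R \<zeta> (sigma \<alpha> \<beta> h t f \<tau> D R b (\<delta>(r := d'))) rk x'
        \<longrightarrow> rid_util \<alpha> \<beta> h t f \<tau> D R \<zeta> b (\<delta>(r := d')) x' r dbar
            \<le> rid_util \<alpha> \<beta> h t f \<tau> D R \<zeta> b \<delta> x r dbar)"
proof (intro conjI allI impI)
  fix d bbar b' x x'
  assume dD: "d \<in> D" and bb: "b d = bbar"
    and ox: "ds_outcome D R \<zeta> (sigma \<alpha> \<beta> h t f \<tau> D R b \<delta>) rk x"
    and nm: "\<not> (\<exists>r\<in>R. x d r)"
    and ox': "ds_outcome D R \<zeta> (sigma \<alpha> \<beta> h t f \<tau> D R (b(d := b')) \<delta>) rk x'"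
  define S where "S = sigma \<alpha> \<beta> h t f \<tau> D R b \<delta>"
  define S' where "S' = sigma \<alpha> \<beta> h t f \<tau> D R (b(d := b')) \<delta>"
  have agree: "\<forall>d''\<in>D. \<forall>r\<in>R. d'' \<noteq> d \<longrightarrow> S d'' r = S' d'' r"
    by (simp add: S_def S'_def sigma_def)
  have u0: "drv_util \<alpha> \<beta> h t f \<tau> D R \<zeta> b \<delta> x d bbar = 0"
    using nm by (simp add: drv_util_def)
  show "drv_util \<alpha> \<beta> h t f \<tau> D R \<zeta> (b(d := b')) \<delta> x' d bbar
            \<le> drv_util \<alpha> \<beta> h t f \<tau> D R \<zeta> b \<delta> x d bbar"
  proof (cases "\<exists>r\<in>R. x' d r")
    case False thus ?thesis using u0 by (simp add: drv_util_def)
  next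
    case True
    then obtain r0 where r0: "r0 \<in> R" "x' d r0" by blast
    have fx: "ds_feasible D R S x" using ox by (simp add: S_def ds_outcome_def ds_optimal_def)
    have fx': "ds_feasible D R S' x'" using ox' by (simp add: S'_def ds_outcome_def ds_optimal_def)
    have "msum D R S x = msum D R S' x" using msum_row_same[of R x d D S S'] nm agree by blast
    hence fxS': "ds_feasible D R S' x" using fx by (simp add: ds_feasible_def)
    have "x \<noteq> x'" using nm r0 by blast
    hence nf: "\<not> ds_feasible D R S x'"
      using outcome_eq[of D R \<zeta> S rk x S' x'] ox ox' assms(7) fxS' unfolding S_def S'_def by blast
    hence neg: "msum D R S x' < 0" using fx' by (auto simp: ds_feasible_def)
    have V0: "msum D R S' x' \<ge> 0" using fx' by (simp add: ds_feasible_def)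
    have c1: "card {r\<in>R. x' d r} \<le> Suc 0" using fx' dD by (simp add: ds_feasible_def)
    have uniq: "\<forall>r\<in>R. x' d r \<longleftrightarrow> r = r0"
      using c1 r0 card_le_Suc0_iff_eq[of "{r\<in>R. x' d r}"] assms(2) by auto
    have pr: "partner_drv R x' d = r0"
      unfolding partner_drv_def using uniq r0 by (intro the_equality) auto
    have diff: "msum D R S x' = msum D R S' x' + (S d r0 - S' d r0)"
      using msum_row_diff[of D R d r0 x' S S', OF assms(1,2) dD r0(1) uniq agree] .
    have sd: "S d r0 - S' d r0 = Pdrv \<alpha> h t f \<tau> R b' d r0 - Pdrv \<alpha> h t f \<tau> R bbar d r0"
      by (simp add: S_def S'_def sigma_def bb)
    define q where "q = dU_drv D R \<zeta> S' d / dU_total D R \<zeta> S' x'"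
    have q1: "q \<le> 1" using drv_ratio[of D R d r0 x' \<zeta> S', OF assms(1,2) dD r0] unfolding q_def by blast
    have bon: "bonus_drv D R \<zeta> S' x' d = msum D R S' x' * q"
      by (simp add: bonus_drv_def q_def)
    have util: "drv_util \<alpha> \<beta> h t f \<tau> D R \<zeta> (b(d := b')) \<delta> x' d bbar
        = Pdrv \<alpha> h t f \<tau> R b' d r0 + msum D R S' x' * q - Pdrv \<alpha> h t f \<tau> R bbar d r0"
      using True pr bon unfolding drv_util_def S'_def by (simp add: Let_def)
    have "msum D R S' x' * q \<le> msum D R S' x'" using V0 q1 by (simp add: mult_left_le)
    thus ?thesis using util u0 diff sd neg by linarith
  qed
next
  fix r dbar d' x x'
  assume rR: "r \<in> R" and dd: "\<delta> r = dbar"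
    and ox: "ds_outcome D R \<zeta> (sigma \<alpha> \<beta> h t f \<tau> D R b \<delta>) rk x"
    and nm: "\<not> (\<exists>d\<in>D. x d r)"
    and ox': "ds_outcome D R \<zeta> (sigma \<alpha> \<beta> h t f \<tau> D R b (\<delta>(r := d'))) rk x'"
  define S where "S = sigma \<alpha> \<beta> h t f \<tau> D R b \<delta>"
  define S' where "S' = sigma \<alpha> \<beta> h t f \<tau> D R b (\<delta>(r := d'))"
  have agree: "\<forall>d\<in>D. \<forall>r'\<in>R. r' \<noteq> r \<longrightarrow> S d r' = S' d r'"
    by (simp add: S_def S'_def sigma_def)
  have u0: "rid_util \<alpha> \<beta> h t f \<tau> D R \<zeta> b \<delta> x r dbar = 0"
    using nm by (simp add: rid_util_def)
  show "rid_util \<alpha> \<beta> h t f \<tau> D R \<zeta> b (\<delta>(r := d')) x' r dbar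
            \<le> rid_util \<alpha> \<beta> h t f \<tau> D R \<zeta> b \<delta> x r dbar"
  proof (cases "\<exists>d\<in>D. x' d r")
    case False thus ?thesis using u0 by (simp add: rid_util_def)
  next
    case True
    then obtain d0 where d0: "d0 \<in> D" "x' d0 r" by blast
    have fx: "ds_feasible D R S x" using ox by (simp add: S_def ds_outcome_def ds_optimal_def)
    have fx': "ds_feasible D R S' x'" using ox' by (simp add: S'_def ds_outcome_def ds_optimal_def)
    have "msum D R S x = msum D R S' x" using msum_col_same[of D x r R S S'] nm agree by blast
    hence fxS': "ds_feasible D R S' x" using fx by (simp add: ds_feasible_def)
    have "x \<noteq> x'" using nm d0 by blast
    hence nf: "\<not> ds_feasible D R S x'"
      using outcome_eq[of D R \<zeta> S rk x S' x'] ox ox' assms(7) fxS' unfolding S_def S'_def by blast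
    hence neg: "msum D R S x' < 0" using fx' by (auto simp: ds_feasible_def)
    have V0: "msum D R S' x' \<ge> 0" using fx' by (simp add: ds_feasible_def)
    have c1: "card {d\<in>D. x' d r} \<le> Suc 0" using fx' rR by (simp add: ds_feasible_def)
    have uniq: "\<forall>d\<in>D. x' d r \<longleftrightarrow> d = d0"
      using c1 d0 card_le_Suc0_iff_eq[of "{d\<in>D. x' d r}"] assms(1) by auto
    have pr: "partner_rid D x' r = d0"
      unfolding partner_rid_def using uniq d0 by (intro the_equality) auto
    have diff: "msum D R S x' = msum D R S' x' + (S d0 r - S' d0 r)"
      using msum_col_diff[of D R r d0 x' S S', OF assms(1,2) rR d0(1) uniq agree] .
    have sd: "S d0 r - S' d0 r = Prid \<beta> h \<tau> D dbar d0 r - Prid \<beta> h \<tau> D d' d0 r"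
      by (simp add: S_def S'_def sigma_def dd)
    define q where "q = dU_rid D R \<zeta> S' r / dU_total D R \<zeta> S' x'"
    have q1: "q \<le> 1" using rid_ratio[of D R r d0 x' \<zeta> S', OF assms(1,2) rR d0] unfolding q_def by blast
    have bon: "bonus_rid D R \<zeta> S' x' r = msum D R S' x' * q"
      by (simp add: bonus_rid_def q_def)
    have util: "rid_util \<alpha> \<beta> h t f \<tau> D R \<zeta> b (\<delta>(r := d')) x' r dbar
        = Prid \<beta> h \<tau> D dbar d0 r - (Prid \<beta> h \<tau> D d' d0 r - msum D R S' x' * q)"
      using True pr bon unfolding rid_util_def S'_def by (simp add: Let_def)
    have "msum D R S' x' * q \<le> msum D R S' x'" using V0 q1 by (simp add: mult_left_le)
    thus ?thesis using util u0 diff sd neg by linarith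
  qed
qed

end
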